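(* Let $f(s)$, $g(s)$, $h(s)$ be holomorphic in an open neighborhood of $s_0\in\mathbb{C}$, and assume $|f(s_0)|=|g(s_0)|$. Then for every integer $k\geq1$, the residue \[ \mathop{\mathrm{Res}}_{s=s_0}\frac{(f(s)g(s))^k}{(s-s_0)^{2k}}h(s) \] equals $|f(s_0)|=|g(s_0)|$ times a $\mathbb{C}$-linear combination of monomials in the derivative values $f^{(\ell)}(s_0)$, $g^{(\ell)}(s_0)$, $h^{(\ell)}(s_0)$ for $\ell\in\{0,\dots,2k-1\}$, where the monomials occurring and the moduli of the coefficients depend only on $k$. *)

theory Defs
  imports "HOL-Complex_Analysis.Complex_Analysis"
begin

text \<open>A monomial in the derivative values is an exponent vector
  m :: nat \<times> nat \<Rightarrow> nat, where m (i, l) is the exponent of the l-th derivative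
  of the i-th function (i = 0: f, i = 1: g, i = 2: h), l ranging over 0..2k-1.\<close>

type_synonym monomial = "nat \<times> nat \<Rightarrow> nat"

definition deriv_val ::
  "(complex \<Rightarrow> complex) \<Rightarrow> (complex \<Rightarrow> complex) \<Rightarrow> (complex \<Rightarrow> complex)
    \<Rightarrow> complex \<Rightarrow> nat \<Rightarrow> nat \<Rightarrow> complex" where
  "deriv_val f g h s0 i l = (deriv ^^ l) ([f, g, h] ! i) s0"

definition mono_eval ::
  "nat \<Rightarrow> (complex \<Rightarrow> complex) \<Rightarrow> (complex \<Rightarrow> complex) \<Rightarrow> (complex \<Rightarrow> complex)
    \<Rightarrow> complex \<Rightarrow> monomial \<Rightarrow> complex" where
  "mono_eval k f g h s0 m =
     (\<Prod>(i, l)\<in>{0..<3} \<times> {0..<2*k}. deriv_val f g h s0 i l ^ m (i, l))"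

end

theory Submission imports Defs begin

definition LS :: "nat \<Rightarrow> nat \<Rightarrow> nat list set" where
  "LS N n = {xs. length xs = N \<and> sum_list xs = n}"

lemma finite_LS: "finite (LS N n)"
proof (rule finite_subset[OF _ finite_lists_length_eq[of "{..n}" N]])
  show "LS N n \<subseteq> {xs. set xs \<subseteq> {..n} \<and> length xs = N}"
    by (auto simp: LS_def dest: member_le_sum_list)
qed auto

lemma LS_0: "LS 0 n = (if n = 0 then {[]} else {})"
  by (auto simp: LS_def)

lemma LS_Suc: "LS (Suc N) n = (\<Union>i\<in>{0..n}. (\<lambda>xs. xs @ [n - i]) ` LS N i)"
proof safe
  fix ys assume ys: "ys \<in> LS (Suc N) n"
  then have ne: "ys \<noteq> []" by (auto simp: LS_def)
  then have e: "ys = butlast ys @ [last ys]" by simp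
  have s: "sum_list ys = sum_list (butlast ys) + last ys"
    by (subst e) simp
  show "ys \<in> (\<Union>i\<in>{0..n}. (\<lambda>xs. xs @ [n - i]) ` LS N i)"
  proof
    show "sum_list (butlast ys) \<in> {0..n}" using ys s by (auto simp: LS_def)
    show "ys \<in> (\<lambda>xs. xs @ [n - sum_list (butlast ys)]) ` LS N (sum_list (butlast ys))"
    proof (rule image_eqI[where x="butlast ys"])
      have "n - sum_list (butlast ys) = last ys" using ys s by (auto simp: LS_def)
      then show "ys = butlast ys @ [n - sum_list (butlast ys)]" using e by simp
    qed (use ys s in \<open>auto simp: LS_def\<close>)
  qed
qed (auto simp: LS_def)

lemma funpow_deriv_const: "(deriv ^^ Suc n) (\<lambda>s. c) = (\<lambda>s. 0)"
  by (induction n) auto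

lemma prod_regroup:
  fixes G :: "'b \<Rightarrow> 'c::comm_monoid_mult"
  assumes "finite J" "finite B" "p ` J \<subseteq> B"
  shows "(\<Prod>j\<in>J. G (p j)) = (\<Prod>q\<in>B. G q ^ card {j\<in>J. p j = q})"
  using assms
proof (induction J rule: finite_induct)
  case empty then show ?case by simp
next
  case (insert x J)
  have c: "card {j\<in>insert x J. p j = q} = (if p x = q then 1 else 0) + card {j\<in>J. p j = q}" for q
  proof (cases "p x = q")
    case True
    then have "{j\<in>insert x J. p j = q} = insert x {j\<in>J. p j = q}" by auto
    then show ?thesis using True insert by simp
  next
    case False
    then have "{j\<in>insert x J. p j = q} = {j\<in>J. p j = q}" by auto
    then show ?thesis using False by simp
  qed
  have "(\<Prod>q\<in>B. G q ^ card {j\<in>insert x J. p j = q})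
      = (\<Prod>q\<in>B. G q ^ (if p x = q then 1 else 0)) * (\<Prod>q\<in>B. G q ^ card {j\<in>J. p j = q})"
    unfolding c power_add by (rule prod.distrib)
  also have "(\<Prod>q\<in>B. G q ^ (if p x = q then 1 else 0)) = G (p x)"
  proof -
    have "(\<Prod>q\<in>B. G q ^ (if p x = q then 1 else 0)) = (\<Prod>q\<in>B. if p x = q then G q else 1)"
      by (rule prod.cong) auto
    also have "\<dots> = G (p x)" using insert by (simp add: prod.delta)
    finally show ?thesis .
  qed
  finally show ?case using insert by simp
qed

lemma leibniz_gen:
  "\<exists>w::nat list \<Rightarrow> complex. \<forall>(\<phi>::nat \<Rightarrow> complex \<Rightarrow> complex) S s0. open S \<longrightarrow> s0 \<in> S \<longrightarrow>
     (\<forall>j<N. \<phi> j holomorphic_on S) \<longrightarrow>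
     (deriv ^^ n) (\<lambda>s. \<Prod>j<N. \<phi> j s) s0 =
       (\<Sum>xs\<in>LS N n. w xs * (\<Prod>j<N. (deriv ^^ (xs ! j)) (\<phi> j) s0))"
proof (induction N arbitrary: n)
  case 0
  show ?case
  proof (cases n)
    case 0
    then show ?thesis by (intro exI[of _ "\<lambda>_. 1"]) (simp add: LS_0)
  next
    case (Suc m)
    then show ?thesis by (simp add: LS_0 funpow_deriv_const del: funpow.simps)
  qed
next
  case (Suc N)
  have "\<forall>i. \<exists>w::nat list \<Rightarrow> complex. \<forall>(\<phi>::nat \<Rightarrow> complex \<Rightarrow> complex) S s0. open S \<longrightarrow> s0 \<in> S \<longrightarrow>
     (\<forall>j<N. \<phi> j holomorphic_on S) \<longrightarrow>
     (deriv ^^ i) (\<lambda>s. \<Prod>j<N. \<phi> j s) s0 =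
       (\<Sum>xs\<in>LS N i. w xs * (\<Prod>j<N. (deriv ^^ (xs ! j)) (\<phi> j) s0))"
    using Suc.IH by blast
  from choice[OF this] obtain W where W0: "\<forall>i. \<forall>(\<phi>::nat \<Rightarrow> complex \<Rightarrow> complex) S s0. open S \<longrightarrow> s0 \<in> S \<longrightarrow>
     (\<forall>j<N. \<phi> j holomorphic_on S) \<longrightarrow>
     (deriv ^^ i) (\<lambda>s. \<Prod>j<N. \<phi> j s) s0 =
       (\<Sum>xs\<in>LS N i. W i xs * (\<Prod>j<N. (deriv ^^ (xs ! j)) (\<phi> j) s0))" by blast
  have W: "\<And>i \<phi> S s0. open S \<Longrightarrow> s0 \<in> S \<Longrightarrow> (\<forall>j<N. \<phi> j holomorphic_on S) \<Longrightarrow>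
     (deriv ^^ i) (\<lambda>s. \<Prod>j<N. \<phi> j s) s0 =
       (\<Sum>xs\<in>LS N i. W i xs * (\<Prod>j<N. (deriv ^^ (xs ! j)) (\<phi> j) s0))"
    using W0 by blast
  define w where "w ys = of_nat (n choose (n - last ys)) * W (n - last ys) (butlast ys)" for ys
  show ?case
  proof (intro exI[of _ w] allI impI)
    fix \<phi> :: "nat \<Rightarrow> complex \<Rightarrow> complex" and S s0
    assume S: "open S" "s0 \<in> S" and hol: "\<forall>j<Suc N. \<phi> j holomorphic_on S"
    have holP: "(\<lambda>s. \<Prod>j<N. \<phi> j s) holomorphic_on S"
      using hol by (intro holomorphic_on_prod) auto
    have "(deriv ^^ n) (\<lambda>s. \<Prod>j<Suc N. \<phi> j s) s0 = (deriv ^^ n) (\<lambda>s. (\<Prod>j<N. \<phi> j s) * \<phi> N s) s0"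
      by simp
    also have "\<dots> = (\<Sum>i = 0..n. of_nat (n choose i) * (deriv ^^ i) (\<lambda>s. \<Prod>j<N. \<phi> j s) s0 * (deriv ^^ (n-i)) (\<phi> N) s0)"
      by (rule higher_deriv_mult[OF holP _ S]) (use hol in auto)
    also have "\<dots> = (\<Sum>i = 0..n. \<Sum>xs\<in>LS N i. w (xs @ [n - i]) * (\<Prod>j<Suc N. (deriv ^^ ((xs @ [n - i]) ! j)) (\<phi> j) s0))"
    proof (rule sum.cong[OF refl])
      fix i assume i: "i \<in> {0..n}"
      have "of_nat (n choose i) * (deriv ^^ i) (\<lambda>s. \<Prod>j<N. \<phi> j s) s0 * (deriv ^^ (n-i)) (\<phi> N) s0
         = of_nat (n choose i) * (\<Sum>xs\<in>LS N i. W i xs * (\<Prod>j<N. (deriv ^^ (xs ! j)) (\<phi> j) s0)) * (deriv ^^ (n-i)) (\<phi> N) s0"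
        using W[OF S] hol by simp
      also have "\<dots> = (\<Sum>xs\<in>LS N i. w (xs @ [n - i]) * (\<Prod>j<Suc N. (deriv ^^ ((xs @ [n - i]) ! j)) (\<phi> j) s0))"
        unfolding sum_distrib_left sum_distrib_right
      proof (rule sum.cong[OF refl])
        fix xs assume xs: "xs \<in> LS N i"
        then have len: "length xs = N" by (simp add: LS_def)
        have p: "(\<Prod>j<Suc N. (deriv ^^ ((xs @ [n - i]) ! j)) (\<phi> j) s0)
           = (\<Prod>j<N. (deriv ^^ (xs ! j)) (\<phi> j) s0) * (deriv ^^ (n-i)) (\<phi> N) s0"
          using len by (simp add: nth_append)
        have ww: "w (xs @ [n - i]) = of_nat (n choose i) * W i xs"
          using i by (simp add: w_def)
        show "of_nat (n choose i) * (W i xs * (\<Prod>j<N. (deriv ^^ (xs ! j)) (\<phi> j) s0)) * (deriv ^^ (n-i)) (\<phi> N) s0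
           = w (xs @ [n - i]) * (\<Prod>j<Suc N. (deriv ^^ ((xs @ [n - i]) ! j)) (\<phi> j) s0)"
          unfolding p ww by (simp only: mult_ac)
      qed
      finally show "of_nat (n choose i) * (deriv ^^ i) (\<lambda>s. \<Prod>j<N. \<phi> j s) s0 * (deriv ^^ (n-i)) (\<phi> N) s0
         = (\<Sum>xs\<in>LS N i. w (xs @ [n - i]) * (\<Prod>j<Suc N. (deriv ^^ ((xs @ [n - i]) ! j)) (\<phi> j) s0))" .
    qed
    also have "\<dots> = (\<Sum>i = 0..n. \<Sum>ys\<in>(\<lambda>xs. xs @ [n - i]) ` LS N i. w ys * (\<Prod>j<Suc N. (deriv ^^ (ys ! j)) (\<phi> j) s0))"
      by (rule sum.cong[OF refl], subst sum.reindex) (auto simp: inj_on_def)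
    also have "\<dots> = (\<Sum>ys\<in>LS (Suc N) n. w ys * (\<Prod>j<Suc N. (deriv ^^ (ys ! j)) (\<phi> j) s0))"
      unfolding LS_Suc
      by (rule sum.UNION_disjoint[symmetric]) (auto simp: finite_LS)
    finally show "(deriv ^^ n) (\<lambda>s. \<Prod>j<Suc N. \<phi> j s) s0 =
       (\<Sum>ys\<in>LS (Suc N) n. w ys * (\<Prod>j<Suc N. (deriv ^^ (ys ! j)) (\<phi> j) s0))" .
  qed
qed

definition phase :: "complex \<Rightarrow> complex" where
  "phase z = (if z = 0 then 1 else z / complex_of_real (norm z))"

lemma phase_eq: "z = complex_of_real (norm z) * phase z"
  by (simp add: phase_def)

lemma norm_phase: "norm (phase z) = 1"
  by (simp add: phase_def norm_divide)

lemma LS_zero_exists: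
  assumes "xs \<in> LS (Suc (2*k)) (2*k - 1)" "k \<ge> 1"
  shows "\<exists>j<2*k. xs ! j = 0"
proof (rule ccontr)
  assume "\<not> ?thesis"
  then have ge: "\<And>j. j < 2*k \<Longrightarrow> xs ! j \<ge> 1" by force
  have len: "length xs = Suc (2*k)" and sm: "sum_list xs = 2*k - 1" using assms by (auto simp: LS_def)
  have "2*k = (\<Sum>j = 0..<2*k. (1::nat))" by simp
  also have "\<dots> \<le> (\<Sum>j = 0..<2*k. xs ! j)" by (rule sum_mono) (use ge in auto)
  also have "\<dots> \<le> (\<Sum>j = 0..<Suc (2*k). xs ! j)" by (rule sum_mono2) auto
  also have "\<dots> = sum_list xs" using len by (simp add: sum_list_sum_nth)
  finally show False using sm assms(2) by simp
qed

theorem lemma3p2: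
  fixes k :: nat
  assumes "k \<ge> 1"
  shows "\<exists>(M :: monomial set) (r :: monomial \<Rightarrow> real). finite M \<and>
    (\<forall>(f :: complex \<Rightarrow> complex) (g :: complex \<Rightarrow> complex) (h :: complex \<Rightarrow> complex)
        (s0 :: complex) (S :: complex set).
       open S \<and> s0 \<in> S \<and> f holomorphic_on S \<and> g holomorphic_on S \<and> h holomorphic_on S \<and>
       norm (f s0) = norm (g s0) \<longrightarrow>
       (\<exists>c :: monomial \<Rightarrow> complex. (\<forall>m\<in>M. norm (c m) = r m) \<and>
          residue (\<lambda>s. (f s * g s) ^ k / (s - s0) ^ (2 * k) * h s) s0 =
            complex_of_real (norm (f s0)) * (\<Sum>m\<in>M. c m * mono_eval k f g h s0 m)))"
proof -
  define A where "A = LS (Suc (2*k)) (2*k - 1)"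
  obtain w :: "nat list \<Rightarrow> complex" where w: "\<And>(\<phi>::nat \<Rightarrow> complex \<Rightarrow> complex) S s0. open S \<Longrightarrow> s0 \<in> S \<Longrightarrow>
     (\<forall>j<Suc (2*k). \<phi> j holomorphic_on S) \<Longrightarrow>
     (deriv ^^ (2*k - 1)) (\<lambda>s. \<Prod>j<Suc (2*k). \<phi> j s) s0 =
       (\<Sum>xs\<in>A. w xs * (\<Prod>j<Suc (2*k). (deriv ^^ (xs ! j)) (\<phi> j) s0))"
    using leibniz_gen[of "Suc (2*k)" "2*k - 1"] unfolding A_def by blast
  define ty :: "nat \<Rightarrow> nat" where "ty j = (if j < k then 0 else if j < 2*k then 1 else 2)" for j
  define j0 :: "nat list \<Rightarrow> nat" where "j0 xs = (LEAST j. xs ! j = 0)" for xs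
  define J' where "J' xs = {..<Suc (2*k)} - {j0 xs}" for xs
  define mk :: "nat list \<Rightarrow> monomial" where
    "mk xs = (\<lambda>(i, l). if i < 3 then card {j\<in>J' xs. (ty j, xs ! j) = (i, l)}
                       else if i = 3 then xs ! l else 0)" for xs
  define dec :: "monomial \<Rightarrow> nat list" where "dec m = map (\<lambda>j. m (3, j)) [0..<Suc (2*k)]" for m
  define M where "M = mk ` A"
  define r where "r m = norm (w (dec m)) / fact (2*k - 1)" for m
  have lenA: "length xs = Suc (2*k)" if "xs \<in> A" for xs using that by (simp add: A_def LS_def)
  have dec_mk: "dec (mk xs) = xs" if "xs \<in> A" for xs
    using lenA[OF that] map_nth[of xs] by (simp add: dec_def mk_def del: upt_Suc)
  have inj: "inj_on mk A" by (rule inj_on_inverseI[where g = dec]) (rule dec_mk)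
  have j0: "j0 xs < 2*k \<and> xs ! j0 xs = 0" if xsA: "xs \<in> A" for xs
  proof -
    obtain j where j: "j < 2*k" "xs ! j = 0" using LS_zero_exists[of xs k] xsA assms by (auto simp: A_def)
    have "xs ! j0 xs = 0" unfolding j0_def by (rule LeastI[of _ j]) (use j in auto)
    moreover have "j0 xs \<le> j" unfolding j0_def by (rule Least_le) (use j in auto)
    ultimately show ?thesis using j by simp
  qed
  have small: "xs ! j < 2*k" if "xs \<in> A" "j < Suc (2*k)" for xs j
  proof -
    have "xs ! j \<le> sum_list xs" by (rule elem_le_sum_list) (use that lenA in auto)
    then show ?thesis using that assms by (simp add: A_def LS_def)
  qed
  show ?thesis
  proof (intro exI[of _ M] exI[of _ r] conjI allI impI)
    show "finite M" unfolding M_def A_def by (intro finite_imageI finite_LS)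
    fix f g h :: "complex \<Rightarrow> complex" and s0 and S :: "complex set"
    assume H: "open S \<and> s0 \<in> S \<and> f holomorphic_on S \<and> g holomorphic_on S \<and> h holomorphic_on S \<and>
       norm (f s0) = norm (g s0)"
    then have S: "open S" "s0 \<in> S" and hf: "f holomorphic_on S" and hg: "g holomorphic_on S"
      and hh: "h holomorphic_on S" and nfg: "norm (f s0) = norm (g s0)" by auto
    define u where "u xs = (if j0 xs < k then phase (f s0) else phase (g s0))" for xs
    define c where "c m = w (dec m) / fact (2*k - 1) * u (dec m)" for m
    define \<phi> where "\<phi> j = [f, g, h] ! ty j" for j
    have hphi: "\<forall>j<Suc (2*k). \<phi> j holomorphic_on S"
      using hf hg hh by (auto simp: \<phi>_def ty_def)
    have prodphi: "(\<Prod>j<Suc (2*k). \<phi> j s) = (f s * g s) ^ k * h s" for s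
    proof -
      have "(\<Prod>j<Suc (2*k). \<phi> j s) = (\<Prod>j\<in>{0..<2*k}. \<phi> j s) * \<phi> (2*k) s"
        by (simp add: lessThan_atLeast0)
      also have "(\<Prod>j\<in>{0..<2*k}. \<phi> j s) = (\<Prod>j\<in>{0..<k}. \<phi> j s) * (\<Prod>j\<in>{k..<2*k}. \<phi> j s)"
        by (rule prod.atLeastLessThan_concat[symmetric]) auto
      also have "(\<Prod>j\<in>{0..<k}. \<phi> j s) = (\<Prod>j\<in>{0..<k}. f s)"
        by (rule prod.cong) (auto simp: \<phi>_def ty_def)
      also have "(\<Prod>j\<in>{k..<2*k}. \<phi> j s) = (\<Prod>j\<in>{k..<2*k}. g s)"
        by (rule prod.cong) (auto simp: \<phi>_def ty_def)
      also have "\<phi> (2*k) s = h s" by (simp add: \<phi>_def ty_def)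
      finally show ?thesis by (simp add: power_mult_distrib mult_2)
    qed
    have holP: "(\<lambda>s. \<Prod>j<Suc (2*k). \<phi> j s) holomorphic_on S"
      using hphi by (intro holomorphic_on_prod) auto
    have fe: "(\<lambda>s. (f s * g s) ^ k / (s - s0) ^ (2 * k) * h s)
        = (\<lambda>s. (\<Prod>j<Suc (2*k). \<phi> j s) / (s - s0) ^ Suc (2*k - 1))"
      unfolding prodphi using assms by (auto simp: Suc_diff_Suc)
    have P: "(\<Prod>j<Suc (2*k). (deriv ^^ (xs ! j)) (\<phi> j) s0)
        = complex_of_real (norm (f s0)) * u xs * mono_eval k f g h s0 (mk xs)" if xs: "xs \<in> A" for xs
    proof -
      have j0in: "j0 xs \<in> {..<Suc (2*k)}" using j0[OF xs] by simp
      have "(\<Prod>j<Suc (2*k). (deriv ^^ (xs ! j)) (\<phi> j) s0)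
          = (deriv ^^ (xs ! j0 xs)) (\<phi> (j0 xs)) s0 * (\<Prod>j\<in>J' xs. (deriv ^^ (xs ! j)) (\<phi> j) s0)"
        unfolding J'_def by (rule prod.remove[OF _ j0in]) simp
      also have "(deriv ^^ (xs ! j0 xs)) (\<phi> (j0 xs)) s0 = complex_of_real (norm (f s0)) * u xs"
      proof -
        have "(deriv ^^ (xs ! j0 xs)) (\<phi> (j0 xs)) s0 = (if j0 xs < k then f s0 else g s0)"
          using j0[OF xs] by (simp add: \<phi>_def ty_def)
        also have "\<dots> = complex_of_real (norm (f s0)) * u xs"
          using phase_eq[of "f s0"] phase_eq[of "g s0"] nfg by (simp add: u_def)
        finally show ?thesis .
      qed
      also have "(\<Prod>j\<in>J' xs. (deriv ^^ (xs ! j)) (\<phi> j) s0)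
          = (\<Prod>j\<in>J' xs. (\<lambda>(i, l). deriv_val f g h s0 i l) (ty j, xs ! j))"
        by (simp add: deriv_val_def \<phi>_def)
      also have "\<dots> = (\<Prod>q\<in>{0..<3} \<times> {0..<2*k}. (\<lambda>(i, l). deriv_val f g h s0 i l) q ^ card {j\<in>J' xs. (ty j, xs ! j) = q})"
        by (rule prod_regroup) (use small[OF xs] in \<open>auto simp: J'_def ty_def\<close>)
      also have "\<dots> = mono_eval k f g h s0 (mk xs)"
        unfolding mono_eval_def by (rule prod.cong) (auto simp: mk_def)
      finally show ?thesis by (simp add: mult_ac)
    qed
    show "\<exists>c :: monomial \<Rightarrow> complex. (\<forall>m\<in>M. norm (c m) = r m) \<and>
          residue (\<lambda>s. (f s * g s) ^ k / (s - s0) ^ (2 * k) * h s) s0 =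
            complex_of_real (norm (f s0)) * (\<Sum>m\<in>M. c m * mono_eval k f g h s0 m)"
    proof (intro exI[of _ c] conjI ballI)
      fix m assume "m \<in> M"
      then obtain xs where "xs \<in> A" "m = mk xs" by (auto simp: M_def)
      then show "norm (c m) = r m"
        by (simp add: c_def r_def norm_mult norm_divide u_def norm_phase)
    next
      have "residue (\<lambda>s. (f s * g s) ^ k / (s - s0) ^ (2 * k) * h s) s0
          = (deriv ^^ (2*k - 1)) (\<lambda>s. \<Prod>j<Suc (2*k). \<phi> j s) s0 / fact (2*k - 1)"
        unfolding fe by (rule residue_holomorphic_over_power[OF S holP])
      also have "\<dots> = (\<Sum>xs\<in>A. w xs * (\<Prod>j<Suc (2*k). (deriv ^^ (xs ! j)) (\<phi> j) s0)) / fact (2*k - 1)"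
        using w[OF S hphi] by simp
      also have "\<dots> = complex_of_real (norm (f s0)) * (\<Sum>xs\<in>A. c (mk xs) * mono_eval k f g h s0 (mk xs))"
        unfolding sum_divide_distrib sum_distrib_left
      proof (rule sum.cong[OF refl])
        fix xs assume xs: "xs \<in> A"
        show "w xs * (\<Prod>j<Suc (2*k). (deriv ^^ (xs ! j)) (\<phi> j) s0) / fact (2*k - 1)
          = complex_of_real (norm (f s0)) * (c (mk xs) * mono_eval k f g h s0 (mk xs))"
          unfolding P[OF xs] c_def dec_mk[OF xs] by (simp add: mult_ac)
      qed
      also have "(\<Sum>xs\<in>A. c (mk xs) * mono_eval k f g h s0 (mk xs)) = (\<Sum>m\<in>M. c m * mono_eval k f g h s0 m)"
        unfolding M_def by (rule sum.reindex[OF inj, symmetric, unfolded comp_def])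
      finally show "residue (\<lambda>s. (f s * g s) ^ k / (s - s0) ^ (2 * k) * h s) s0 =
            complex_of_real (norm (f s0)) * (\<Sum>m\<in>M. c m * mono_eval k f g h s0 m)" .
    qed
  qed
qed

end
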